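(* Let $R$ be a domain such that $\mathcal I(R)$ is a BF-monoid. Suppose there exist distinct $X_1,X_2\in R\setminus\{0\}$ such that $\mathfrak a_1(X_1,X_2)$, $\mathfrak b_2(X_1,X_2)$, and $\mathfrak c_{2i+1}(X_1,X_2)$ for all $i\in\mathbb N$ are atoms of $\mathcal I(R)$. Then: \begin{enumerate} \item $\mathcal I(R)$ is not a transfer Krull monoid; \item $\mathcal I(R)$ is not locally finitely generated; \item $\mathcal U_k(\mathcal I(R))=\mathbb N_{\ge2}$ for all $k\ge2$. \end{enumerate}
   Context: $\mathcal I(R)$: semigroup of nonzero ideals of $R$ under multiplication. Ideals: $\mathfrak a_1(X_1,X_2)=\langle X_1,X_2\rangle$; $\mathfrak b_2(X_1,X_2)=\langle X_1^2,X_2^2\rangle$; $\mathfrak c_{2i+1}(X_1,X_2)$ is the ideal generated by the monomials $X_1^{2i+1-t}X_2^t$ with $t\in\{0,1,3,5,\dots,2i+1\}$. Monoids are commutative, unit-cancellative, with identity; atoms, $\mathsf L(a)$ (lengths of factorizations into atoms up to units), $\mathcal L(H)$, BF-monoid (all $\mathsf L(a)$ finite nonempty), $\mathcal U_k(H)$ (union of all $L\in\mathcal L(H)$ containing $k$). Locally finitely generated: for every $a$, the submonoid of all divisors of powers of $a$, modulo units, is finitely generated. Transfer homomorphism $\theta:H\to B$: (T1) $B=\theta(H)B^\times$, $\theta^{-1}(B^\times)=H^\times$; (T2) $\theta(u)=bc$ implies $u=vw$ with $\theta(v)\in bB^\times$, $\theta(w)\in cB^\times$. Krull monoid: cancellative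 monoid with a divisor homomorphism into a factorial monoid. Transfer Krull: has a transfer homomorphism to a Krull monoid. *)

theory Defs
  imports "HOL-Algebra.Ideal_Product" "HOL-Algebra.Divisibility" "HOL-Library.Multiset"
begin

definition ideal_monoid :: "('a, 'b) ring_scheme \<Rightarrow> 'a set monoid" where
  "ideal_monoid R = \<lparr> carrier = {I. ideal I R \<and> I \<noteq> {\<zero>\<^bsub>R\<^esub>}},
                      monoid.mult = ideal_prod R,
                      one = carrier R \<rparr>"

definition ideal_a1 :: "('a, 'b) ring_scheme \<Rightarrow> 'a \<Rightarrow> 'a \<Rightarrow> 'a set" where
  "ideal_a1 R x1 x2 = Idl\<^bsub>R\<^esub> {x1, x2}"

definition ideal_b2 :: "('a, 'b) ring_scheme \<Rightarrow> 'a \<Rightarrow> 'a \<Rightarrow> 'a set" where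
  "ideal_b2 R x1 x2 = Idl\<^bsub>R\<^esub> {x1 [^]\<^bsub>R\<^esub> (2::nat), x2 [^]\<^bsub>R\<^esub> (2::nat)}"

definition ideal_c :: "('a, 'b) ring_scheme \<Rightarrow> nat \<Rightarrow> 'a \<Rightarrow> 'a \<Rightarrow> 'a set" where
  "ideal_c R i x1 x2 = Idl\<^bsub>R\<^esub>
     {x1 [^]\<^bsub>R\<^esub> (2*i+1-t) \<otimes>\<^bsub>R\<^esub> x2 [^]\<^bsub>R\<^esub> t | t. t = 0 \<or> (odd t \<and> t \<le> 2*i+1)}"

definition lprod :: "('a, 'c) monoid_scheme \<Rightarrow> 'a list \<Rightarrow> 'a" where
  "lprod H xs = foldr (\<lambda>x y. x \<otimes>\<^bsub>H\<^esub> y) xs \<one>\<^bsub>H\<^esub>"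

definition unit_cancellative :: "('a, 'c) monoid_scheme \<Rightarrow> bool" where
  "unit_cancellative H \<longleftrightarrow> (\<forall>a\<in>carrier H. \<forall>u\<in>carrier H.
      (a \<otimes>\<^bsub>H\<^esub> u = a \<or> u \<otimes>\<^bsub>H\<^esub> a = a) \<longrightarrow> u \<in> Units H)"

definition atom :: "('a, 'c) monoid_scheme \<Rightarrow> 'a \<Rightarrow> bool" where
  "atom H a \<longleftrightarrow> a \<in> carrier H \<and> a \<notin> Units H \<and>
     (\<forall>b\<in>carrier H. \<forall>c\<in>carrier H. a = b \<otimes>\<^bsub>H\<^esub> c \<longrightarrow> b \<in> Units H \<or> c \<in> Units H)"

definition lengths :: "('a, 'c) monoid_scheme \<Rightarrow> 'a \<Rightarrow> nat set" where
  "lengths H a = {length xs | xs. (\<forall>x\<in>set xs. atom H x) \<and>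
      (\<exists>u\<in>Units H. a = u \<otimes>\<^bsub>H\<^esub> lprod H xs)}"

definition system_of_lengths :: "('a, 'c) monoid_scheme \<Rightarrow> nat set set" where
  "system_of_lengths H = {lengths H a | a. a \<in> carrier H}"

definition union_of_sets_of_lengths :: "('a, 'c) monoid_scheme \<Rightarrow> nat \<Rightarrow> nat set" where
  "union_of_sets_of_lengths H k = \<Union>{L \<in> system_of_lengths H. k \<in> L}"

text \<open>Monoids are commutative and unit-cancellative by convention.\<close>
definition BF_monoid :: "('a, 'c) monoid_scheme \<Rightarrow> bool" where
  "BF_monoid H \<longleftrightarrow> comm_monoid H \<and> unit_cancellative H \<and>
     (\<forall>a\<in>carrier H. finite (lengths H a) \<and> lengths H a \<noteq> {})"

definition divisors_of_powers :: "('a, 'c) monoid_scheme \<Rightarrow> 'a \<Rightarrow> 'a set" where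
  "divisors_of_powers H a = {b \<in> carrier H. \<exists>n::nat. b divides\<^bsub>H\<^esub> (a [^]\<^bsub>H\<^esub> n)}"

definition locally_finitely_generated :: "('a, 'c) monoid_scheme \<Rightarrow> bool" where
  "locally_finitely_generated H \<longleftrightarrow> (\<forall>a\<in>carrier H. \<exists>E. finite E \<and>
      E \<subseteq> divisors_of_powers H a \<and>
      (\<forall>b\<in>divisors_of_powers H a. \<exists>u\<in>Units H. \<exists>xs. set xs \<subseteq> E \<and>
          b = u \<otimes>\<^bsub>H\<^esub> lprod H xs))"

definition monoid_hom :: "('a, 'c) monoid_scheme \<Rightarrow> ('b, 'd) monoid_scheme \<Rightarrow> ('a \<Rightarrow> 'b) \<Rightarrow> bool" where
  "monoid_hom H B f \<longleftrightarrow> (\<forall>x\<in>carrier H. f x \<in> carrier B) \<and> f \<one>\<^bsub>H\<^esub> = \<one>\<^bsub>B\<^esub> \<and>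
      (\<forall>x\<in>carrier H. \<forall>y\<in>carrier H. f (x \<otimes>\<^bsub>H\<^esub> y) = f x \<otimes>\<^bsub>B\<^esub> f y)"

definition transfer_hom :: "('a, 'c) monoid_scheme \<Rightarrow> ('b, 'd) monoid_scheme \<Rightarrow> ('a \<Rightarrow> 'b) \<Rightarrow> bool" where
  "transfer_hom H B \<theta> \<longleftrightarrow> monoid_hom H B \<theta> \<and>
     (\<forall>b\<in>carrier B. \<exists>h\<in>carrier H. \<exists>v\<in>Units B. b = \<theta> h \<otimes>\<^bsub>B\<^esub> v) \<and>
     {h \<in> carrier H. \<theta> h \<in> Units B} = Units H \<and>
     (\<forall>u\<in>carrier H. \<forall>b\<in>carrier B. \<forall>c\<in>carrier B. \<theta> u = b \<otimes>\<^bsub>B\<^esub> c \<longrightarrow>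
        (\<exists>v\<in>carrier H. \<exists>w\<in>carrier H. u = v \<otimes>\<^bsub>H\<^esub> w \<and>
           (\<exists>e\<in>Units B. \<theta> v = b \<otimes>\<^bsub>B\<^esub> e) \<and> (\<exists>e\<in>Units B. \<theta> w = c \<otimes>\<^bsub>B\<^esub> e)))"

definition divisor_hom :: "('a, 'c) monoid_scheme \<Rightarrow> ('b, 'd) monoid_scheme \<Rightarrow> ('a \<Rightarrow> 'b) \<Rightarrow> bool" where
  "divisor_hom H D f \<longleftrightarrow> monoid_hom H D f \<and>
     (\<forall>a\<in>carrier H. \<forall>b\<in>carrier H. f a divides\<^bsub>D\<^esub> f b \<longrightarrow> a divides\<^bsub>H\<^esub> b)"

text \<open>Krull monoid: (commutative) cancellative monoid with a divisor homomorphism into a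
  factorial monoid.  The factorial monoid is taken with carrier type ('b set) multiset,
  which is large enough.\<close>
definition Krull_monoid :: "('b, 'd) monoid_scheme \<Rightarrow> bool" where
  "Krull_monoid B \<longleftrightarrow> comm_monoid_cancel B \<and>
     (\<exists>(F :: ('b set) multiset monoid) \<phi>. factorial_monoid F \<and> divisor_hom B F \<phi>)"

definition transfer_Krull :: "('a, 'c) monoid_scheme \<Rightarrow> ('b, 'd) monoid_scheme itself \<Rightarrow> bool" where
  "transfer_Krull H _ \<longleftrightarrow> (\<exists>(B :: ('b, 'd) monoid_scheme) \<theta>. Krull_monoid B \<and> transfer_hom H B \<theta>)"

end

theory Submission
  imports Defs
begin

definition mon :: "('a, 'b) ring_scheme \<Rightarrow> 'a \<Rightarrow> 'a \<Rightarrow> nat \<times> nat \<Rightarrow> 'a" where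
  "mon R x y d = x [^]\<^bsub>R\<^esub> fst d \<otimes>\<^bsub>R\<^esub> y [^]\<^bsub>R\<^esub> snd d"

definition psum :: "(nat \<times> nat) set \<Rightarrow> (nat \<times> nat) set \<Rightarrow> (nat \<times> nat) set" where
  "psum D E = {(fst d + fst e, snd d + snd e) | d e. d \<in> D \<and> e \<in> E}"

lemma (in cring) colon_ideal:
  assumes K: "ideal K R" and J: "J \<subseteq> carrier R"
  shows "ideal {x \<in> carrier R. \<forall>j\<in>J. x \<otimes> j \<in> K} R"
proof -
  interpret ideal K R by fact
  show ?thesis
  proof (intro idealI subgroup.intro)
    show "ring R" by (rule ring_axioms)
  next
    fix x y assume x: "x \<in> {x \<in> carrier R. \<forall>j\<in>J. x \<otimes> j \<in> K}" and y: "y \<in> {x \<in> carrier R. \<forall>j\<in>J. x \<otimes> j \<in> K}"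
    show "x \<otimes>\<^bsub>add_monoid R\<^esub> y \<in> {x \<in> carrier R. \<forall>j\<in>J. x \<otimes> j \<in> K}"
      using x y J by (auto simp: l_distr subsetD)
  next
    show "\<one>\<^bsub>add_monoid R\<^esub> \<in> {x \<in> carrier R. \<forall>j\<in>J. x \<otimes> j \<in> K}"
      using J by (auto simp: subsetD)
  next
    fix x assume x: "x \<in> {x \<in> carrier R. \<forall>j\<in>J. x \<otimes> j \<in> K}"
    show "inv\<^bsub>add_monoid R\<^esub> x \<in> {x \<in> carrier R. \<forall>j\<in>J. x \<otimes> j \<in> K}"
      using x J by (auto simp: l_minus subsetD simp flip: a_inv_def)
  next
    fix a x assume a: "a \<in> {x \<in> carrier R. \<forall>j\<in>J. x \<otimes> j \<in> K}" and x: "x \<in> carrier R"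
    show "x \<otimes> a \<in> {x \<in> carrier R. \<forall>j\<in>J. x \<otimes> j \<in> K}"
      using a x J by (auto simp: m_assoc subsetD I_l_closed)
    show "a \<otimes> x \<in> {x \<in> carrier R. \<forall>j\<in>J. x \<otimes> j \<in> K}"
    proof -
      have "\<And>j. j \<in> J \<Longrightarrow> a \<otimes> x \<otimes> j = x \<otimes> (a \<otimes> j)"
        using a x J by (auto simp: m_ac subsetD)
      thus ?thesis using a x J by (auto simp: I_l_closed)
    qed
  qed (auto)
qed

lemma (in cring) Idl_mult:
  assumes S: "S \<subseteq> carrier R" and T: "T \<subseteq> carrier R"
  shows "ideal_prod R (Idl S) (Idl T) = Idl (S <#> T)"
proof
  have ST: "S <#> T \<subseteq> carrier R" using S T by (auto simp: set_mult_def)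
  let ?K = "Idl (S <#> T)"
  have K: "ideal ?K R" by (rule genideal_ideal[OF ST])
  have "T \<subseteq> {x \<in> carrier R. \<forall>j\<in>S. x \<otimes> j \<in> ?K}"
  proof
    fix t assume t: "t \<in> T"
    have "\<forall>s\<in>S. t \<otimes> s \<in> ?K"
    proof
      fix s assume s: "s \<in> S"
      have "s \<otimes> t \<in> S <#> T" using s t by (auto simp: set_mult_def)
      hence "s \<otimes> t \<in> ?K" using genideal_self[OF ST] by blast
      thus "t \<otimes> s \<in> ?K" using s t S T by (simp add: m_comm subsetD)
    qed
    thus "t \<in> {x \<in> carrier R. \<forall>j\<in>S. x \<otimes> j \<in> ?K}" using t T by auto
  qed
  hence IT: "Idl T \<subseteq> {x \<in> carrier R. \<forall>j\<in>S. x \<otimes> j \<in> ?K}"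
    by (rule genideal_minimal[OF colon_ideal[OF K S]])
  have "S \<subseteq> {x \<in> carrier R. \<forall>j\<in>Idl T. x \<otimes> j \<in> ?K}"
  proof
    fix s assume s: "s \<in> S"
    have "\<forall>j\<in>Idl T. s \<otimes> j \<in> ?K"
    proof
      fix j assume j: "j \<in> Idl T"
      have "j \<otimes> s \<in> ?K" "j \<in> carrier R" using IT j s by auto
      thus "s \<otimes> j \<in> ?K" using s S by (simp add: m_comm subsetD)
    qed
    thus "s \<in> {x \<in> carrier R. \<forall>j\<in>Idl T. x \<otimes> j \<in> ?K}" using s S by auto
  qed
  hence IS: "Idl S \<subseteq> {x \<in> carrier R. \<forall>j\<in>Idl T. x \<otimes> j \<in> ?K}"
  proof -
    have Tc: "Idl T \<subseteq> carrier R" by (rule additive_subgroup.a_subset[OF ideal.axioms(1)[OF genideal_ideal[OF T]]])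
    show ?thesis by (rule genideal_minimal[OF colon_ideal[OF K Tc]]) fact
  qed
  show "ideal_prod R (Idl S) (Idl T) \<subseteq> ?K"
  proof
    fix x assume "x \<in> ideal_prod R (Idl S) (Idl T)"
    thus "x \<in> ?K"
    proof (induct x rule: ideal_prod.induct)
      case (prod i j) thus ?case using IS by auto
    next
      case (sum s1 s2) thus ?case using K by (simp add: additive_subgroup.a_closed ideal.axioms(1))
    qed
  qed
next
  have "S <#> T \<subseteq> ideal_prod R (Idl S) (Idl T)"
    using genideal_self[OF S] genideal_self[OF T]
    by (auto simp: set_mult_def intro!: ideal_prod.prod)
  thus "Idl (S <#> T) \<subseteq> ideal_prod R (Idl S) (Idl T)"
    by (rule genideal_minimal[OF ideal_prod_is_ideal[OF genideal_ideal[OF S] genideal_ideal[OF T]]])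
qed

lemma (in cring) mon_closed: "x \<in> carrier R \<Longrightarrow> y \<in> carrier R \<Longrightarrow> mon R x y d \<in> carrier R"
  by (simp add: mon_def)

lemma (in cring) mon_mult:
  assumes "x \<in> carrier R" "y \<in> carrier R"
  shows "mon R x y d \<otimes> mon R x y e = mon R x y (fst d + fst e, snd d + snd e)"
  using assms by (simp add: mon_def m_ac nat_pow_mult[symmetric])

lemma (in cring) mon_setmult:
  assumes "x \<in> carrier R" "y \<in> carrier R"
  shows "(mon R x y ` D) <#> (mon R x y ` E) = mon R x y ` psum D E"
proof
  show "(mon R x y ` D) <#> (mon R x y ` E) \<subseteq> mon R x y ` psum D E"
  proof
    fix z assume "z \<in> (mon R x y ` D) <#> (mon R x y ` E)"
    then obtain d e where de: "d \<in> D" "e \<in> E" "z = mon R x y d \<otimes> mon R x y e"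
      by (auto simp: set_mult_def)
    hence "z = mon R x y (fst d + fst e, snd d + snd e)" using assms by (simp add: mon_mult)
    moreover have "(fst d + fst e, snd d + snd e) \<in> psum D E" using de unfolding psum_def by blast
    ultimately show "z \<in> mon R x y ` psum D E" by blast
  qed
  show "mon R x y ` psum D E \<subseteq> (mon R x y ` D) <#> (mon R x y ` E)"
  proof
    fix z assume "z \<in> mon R x y ` psum D E"
    then obtain d e where de: "d \<in> D" "e \<in> E" "z = mon R x y (fst d + fst e, snd d + snd e)"
      by (auto simp: psum_def)
    hence "z = mon R x y d \<otimes> mon R x y e" using assms by (simp add: mon_mult)
    thus "z \<in> (mon R x y ` D) <#> (mon R x y ` E)" using de by (auto simp: set_mult_def)
  qed
qed

lemma (in cring) Idl_mon_mult:
  assumes "x \<in> carrier R" "y \<in> carrier R"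
  shows "ideal_prod R (Idl (mon R x y ` D)) (Idl (mon R x y ` E)) = Idl (mon R x y ` psum D E)"
  using assms by (simp add: Idl_mult mon_setmult image_subset_iff mon_closed)



definition Deg :: "nat \<Rightarrow> (nat \<times> nat) set" where
  "Deg n = {(n - t, t) | t. t \<le> n}"

definition Cset :: "nat \<Rightarrow> (nat \<times> nat) set" where
  "Cset i = {(2*i+1 - t, t) | t. t = 0 \<or> (odd t \<and> t \<le> 2*i+1)}"

lemma Deg1: "Deg 1 = {(1,0),(0,1)}"
  unfolding Deg_def by (auto simp: le_Suc_eq)

lemma Deg0: "Deg 0 = {(0,0)}"
  unfolding Deg_def by auto

lemma psum_Deg: "psum (Deg n) (Deg 1) = Deg (Suc n)"
proof
  show "psum (Deg n) (Deg 1) \<subseteq> Deg (Suc n)"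
  proof
    fix z assume "z \<in> psum (Deg n) (Deg 1)"
    then obtain d e where d: "d \<in> Deg n" and e: "e \<in> Deg 1" and z0: "z = (fst d + fst e, snd d + snd e)"
      unfolding psum_def by blast
    from d obtain t where t: "t \<le> n" and dd: "d = (n - t, t)" unfolding Deg_def by blast
    have z: "z = (n - t + fst e, t + snd e)" using z0 dd by simp
    have e: "e \<in> {(1,0),(0,1)}" using e Deg1 by simp
    show "z \<in> Deg (Suc n)"
    proof (cases "e = (1,0)")
      case True thus ?thesis using t z unfolding Deg_def by (intro CollectI exI[of _ t]) auto
    next
      case False hence "e = (0,1)" using e by auto
      thus ?thesis using t z unfolding Deg_def by (intro CollectI exI[of _ "Suc t"]) auto
    qed
  qed
  show "Deg (Suc n) \<subseteq> psum (Deg n) (Deg 1)"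
  proof
    fix z assume "z \<in> Deg (Suc n)"
    then obtain t where t: "t \<le> Suc n" and z: "z = (Suc n - t, t)" by (auto simp: Deg_def)
    show "z \<in> psum (Deg n) (Deg 1)"
    proof (cases "t \<le> n")
      case True
      have "(n - t, t) \<in> Deg n" "(1,0) \<in> Deg 1" using True by (auto simp: Deg_def Deg1)
      moreover have "z = (fst (n - t, t) + fst (1::nat,0::nat), snd (n-t,t) + snd (1::nat,0::nat))"
        using True z by auto
      ultimately show ?thesis unfolding psum_def by blast
    next
      case False hence tt: "t = Suc n" using t by auto
      have "(0, n) \<in> Deg n" "(0,1) \<in> Deg 1" by (auto simp: Deg_def Deg1 intro: exI[of _ n])
      moreover have "z = (fst (0::nat, n) + fst (0::nat,1::nat), snd (0::nat,n) + snd (0::nat,1::nat))"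
        using tt z by auto
      ultimately show ?thesis unfolding psum_def by blast
    qed
  qed
qed

lemma psum_B: "psum (Deg 1) {(2,0),(0,2)} = Deg 3"
proof -
  have "Deg 3 = {(3,0),(2,1),(1,2),(0,3)}"
    unfolding Deg_def by (auto simp: le_Suc_eq numeral_3_eq_3)
  have "psum {(1,0),(0,1)} {(2,0),(0,2)} = {(3,0),(2,1),(1,2),(0,3)}"
  proof
    show "psum {(1,0),(0,1)} {(2,0),(0,2)} \<subseteq> {(3,0),(2,1),(1,2),(0,3)}"
      unfolding psum_def by auto
    show "{(3,0),(2,1),(1,2),(0,3)} \<subseteq> psum {(1,0),(0,1)} {(2,0),(0,2)}"
    proof -
      have "(3::nat,0::nat) = (fst (1::nat,0::nat) + fst (2::nat,0::nat), snd (1::nat,0::nat) + snd (2::nat,0::nat))" by simp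
      moreover have "(2::nat,1::nat) = (fst (0::nat,1::nat) + fst (2::nat,0::nat), snd (0::nat,1::nat) + snd (2::nat,0::nat))" by simp
      moreover have "(1::nat,2::nat) = (fst (1::nat,0::nat) + fst (0::nat,2::nat), snd (1::nat,0::nat) + snd (0::nat,2::nat))" by simp
      moreover have "(0::nat,3::nat) = (fst (0::nat,1::nat) + fst (0::nat,2::nat), snd (0::nat,1::nat) + snd (0::nat,2::nat))" by simp
      ultimately show ?thesis unfolding psum_def by blast
    qed
  qed
  thus ?thesis using \<open>Deg 3 = _\<close> Deg1 by simp
qed

lemma psum_C: "psum (Deg 1) (Cset i) = Deg (2*i+2)"
proof
  show "psum (Deg 1) (Cset i) \<subseteq> Deg (2*i+2)"
  proof
    fix z assume "z \<in> psum (Deg 1) (Cset i)"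
    then obtain e d where d: "d \<in> Cset i" and e: "e \<in> Deg 1" and z0: "z = (fst e + fst d, snd e + snd d)"
      unfolding psum_def by blast
    from d obtain t where t: "t = 0 \<or> (odd t \<and> t \<le> 2*i+1)" and dd: "d = (2*i+1 - t, t)" unfolding Cset_def by blast
    have z: "z = (fst e + (2*i+1 - t), snd e + t)" using z0 dd by simp
    have e: "e \<in> {(1,0),(0,1)}" using e Deg1 by simp
    have tl: "t \<le> 2*i+1" using t by auto
    show "z \<in> Deg (2*i+2)"
    proof (cases "e = (1,0)")
      case True thus ?thesis using tl z unfolding Deg_def by (intro CollectI exI[of _ t]) auto
    next
      case False hence "e = (0,1)" using e by auto
      thus ?thesis using tl z unfolding Deg_def by (intro CollectI exI[of _ "Suc t"]) auto
    qed
  qed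
  show "Deg (2*i+2) \<subseteq> psum (Deg 1) (Cset i)"
  proof
    fix z assume "z \<in> Deg (2*i+2)"
    then obtain t where t: "t \<le> 2*i+2" and z: "z = (2*i+2 - t, t)" by (auto simp: Deg_def)
    show "z \<in> psum (Deg 1) (Cset i)"
    proof (cases "t = 0 \<or> (odd t \<and> t \<le> 2*i+1)")
      case True
      have "(2*i+1 - t, t) \<in> Cset i" using True by (auto simp: Cset_def)
      moreover have "(1,0) \<in> Deg 1" unfolding Deg1 by simp
      moreover have "z = (fst (1::nat,0::nat) + fst (2*i+1 - t, t), snd (1::nat,0::nat) + snd (2*i+1-t,t))"
        using True z t by auto
      ultimately show ?thesis unfolding psum_def by blast
    next
      case False
      have ev: "even t" "t \<ge> 1" using False t by presburger+
      hence t2: "t \<le> 2*i+1 + 1" "t \<noteq> 2*i+1" "t \<ge> 2" using t by presburger+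
      hence "t - 1 \<le> 2*i+1" "odd (t - 1)" using ev by auto
      hence "(2*i+1 - (t - 1), t - 1) \<in> Cset i" by (auto simp: Cset_def)
      moreover have "(0,1) \<in> Deg 1" unfolding Deg1 by simp
      moreover have "z = (fst (0::nat,1::nat) + fst (2*i+1 - (t-1), t-1), snd (0::nat,1::nat) + snd (2*i+1-(t-1),t-1))"
        using t2 z t by auto
      ultimately show ?thesis unfolding psum_def by blast
    qed
  qed
qed

lemma H_pow_Suc: "x [^]\<^bsub>ideal_monoid R\<^esub> (Suc n) = ideal_prod R (x [^]\<^bsub>ideal_monoid R\<^esub> n) x"
  by (simp add: nat_pow_def ideal_monoid_def)
lemma H_pow_0: "x [^]\<^bsub>ideal_monoid R\<^esub> (0::nat) = carrier R"
  unfolding nat_pow_def ideal_monoid_def by simp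
lemma H_mult: "x \<otimes>\<^bsub>ideal_monoid R\<^esub> y = ideal_prod R x y"
  by (simp add: ideal_monoid_def)

context cring begin

lemma mon_10: "x \<in> carrier R \<Longrightarrow> y \<in> carrier R \<Longrightarrow> mon R x y (1,0) = x"
  by (simp add: mon_def)
lemma mon_01: "x \<in> carrier R \<Longrightarrow> y \<in> carrier R \<Longrightarrow> mon R x y (0,1) = y"
  by (simp add: mon_def)
lemma mon_00: "x \<in> carrier R \<Longrightarrow> y \<in> carrier R \<Longrightarrow> mon R x y (0,0) = \<one>"
  by (simp add: mon_def)
lemma mon_20: "x \<in> carrier R \<Longrightarrow> y \<in> carrier R \<Longrightarrow> mon R x y (2,0) = x [^] (2::nat)"
  by (simp add: mon_def)
lemma mon_02: "x \<in> carrier R \<Longrightarrow> y \<in> carrier R \<Longrightarrow> mon R x y (0,2) = y [^] (2::nat)"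
  by (simp add: mon_def)

lemma a1_mon: "x \<in> carrier R \<Longrightarrow> y \<in> carrier R \<Longrightarrow> ideal_a1 R x y = Idl (mon R x y ` Deg 1)"
proof -
  assume "x \<in> carrier R" "y \<in> carrier R"
  hence "mon R x y ` Deg 1 = {x, y}" unfolding Deg1 by (simp add: mon_def)
  thus ?thesis by (simp add: ideal_a1_def)
qed

lemma b2_mon: "x \<in> carrier R \<Longrightarrow> y \<in> carrier R \<Longrightarrow> ideal_b2 R x y = Idl (mon R x y ` {(2,0),(0,2)})"
  by (simp add: ideal_b2_def mon_20 mon_02)

lemma c_mon: "x \<in> carrier R \<Longrightarrow> y \<in> carrier R \<Longrightarrow> ideal_c R i x y = Idl (mon R x y ` Cset i)"
proof -
  have "{x [^] (2*i+1-t) \<otimes> y [^] t | t. t = 0 \<or> (odd t \<and> t \<le> 2*i+1)} = mon R x y ` Cset i"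
  proof -
    have "Cset i = (\<lambda>t. (2*i+1-t, t)) ` {t. t = 0 \<or> (odd t \<and> t \<le> 2*i+1)}" unfolding Cset_def by blast
    hence "mon R x y ` Cset i = (\<lambda>t. x [^] (2*i+1-t) \<otimes> y [^] t) ` {t. t = 0 \<or> (odd t \<and> t \<le> 2*i+1)}"
      by (simp add: image_image mon_def)
    moreover have "{x [^] (2*i+1-t) \<otimes> y [^] t | t. t = 0 \<or> (odd t \<and> t \<le> 2*i+1)} = (\<lambda>t. x [^] (2*i+1-t) \<otimes> y [^] t) ` {t. t = 0 \<or> (odd t \<and> t \<le> 2*i+1)}"
      by blast
    ultimately show ?thesis by simp
  qed
  thus ?thesis by (simp add: ideal_c_def)
qed

lemma a1_pow:
  assumes "x \<in> carrier R" "y \<in> carrier R"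
  shows "ideal_a1 R x y [^]\<^bsub>ideal_monoid R\<^esub> n = Idl (mon R x y ` Deg n)"
proof (induct n)
  case 0
  show ?case using assms by (simp only: H_pow_0 Deg0 image_insert image_empty mon_00 genideal_one)
next
  case (Suc n)
  have "ideal_a1 R x y [^]\<^bsub>ideal_monoid R\<^esub> Suc n = ideal_prod R (Idl (mon R x y ` Deg n)) (Idl (mon R x y ` Deg 1))"
    by (subst H_pow_Suc, subst Suc, subst a1_mon[OF assms], rule refl)
  also have "\<dots> = Idl (mon R x y ` Deg (Suc n))"
    by (simp only: Idl_mon_mult[OF assms] psum_Deg)
  finally show ?case .
qed

lemma a1_b2:
  assumes "x \<in> carrier R" "y \<in> carrier R"
  shows "ideal_a1 R x y \<otimes>\<^bsub>ideal_monoid R\<^esub> ideal_b2 R x y = ideal_a1 R x y [^]\<^bsub>ideal_monoid R\<^esub> (3::nat)"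
proof -
  have "ideal_a1 R x y \<otimes>\<^bsub>ideal_monoid R\<^esub> ideal_b2 R x y = ideal_prod R (Idl (mon R x y ` Deg 1)) (Idl (mon R x y ` {(2,0),(0,2)}))"
    by (simp only: H_mult a1_mon[OF assms] b2_mon[OF assms])
  also have "\<dots> = Idl (mon R x y ` Deg 3)"
    by (simp only: Idl_mon_mult[OF assms] psum_B)
  finally show ?thesis by (simp only: a1_pow[OF assms])
qed

lemma a1_c:
  assumes "x \<in> carrier R" "y \<in> carrier R"
  shows "ideal_a1 R x y \<otimes>\<^bsub>ideal_monoid R\<^esub> ideal_c R i x y = ideal_a1 R x y [^]\<^bsub>ideal_monoid R\<^esub> (2*i+2)"
proof -
  have "ideal_a1 R x y \<otimes>\<^bsub>ideal_monoid R\<^esub> ideal_c R i x y = ideal_prod R (Idl (mon R x y ` Deg 1)) (Idl (mon R x y ` Cset i))"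
    by (simp only: H_mult a1_mon[OF assms] c_mon[OF assms])
  also have "\<dots> = Idl (mon R x y ` Deg (2*i+2))"
    by (simp only: Idl_mon_mult[OF assms] psum_C)
  finally show ?thesis by (simp only: a1_pow[OF assms])
qed

end


context comm_monoid begin

lemma lprod_Nil[simp]: "lprod G [] = \<one>" by (simp add: lprod_def)
lemma lprod_Cons[simp]: "lprod G (x # xs) = x \<otimes> lprod G xs" by (simp add: lprod_def)

lemma lprod_closed: "set xs \<subseteq> carrier G \<Longrightarrow> lprod G xs \<in> carrier G"
  by (induct xs) auto

lemma lprod_append: "set xs \<subseteq> carrier G \<Longrightarrow> set ys \<subseteq> carrier G \<Longrightarrow>
    lprod G (xs @ ys) = lprod G xs \<otimes> lprod G ys"
  by (induct xs) (auto simp: m_assoc lprod_closed)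

lemma lprod_replicate: "a \<in> carrier G \<Longrightarrow> lprod G (replicate n a) = a [^] n"
  by (induct n) (auto simp: m_comm)

lemma atomD: "atom G x \<Longrightarrow> x \<in> carrier G \<and> x \<notin> Units G"
  by (simp add: atom_def)

lemma unit_factor2: "a \<otimes> b \<in> Units G \<Longrightarrow> a \<in> carrier G \<Longrightarrow> b \<in> carrier G \<Longrightarrow> b \<in> Units G"
  using unit_factor[of b a] by (simp add: m_comm)

lemma lprod_Cons_unit: "set (y # ys) \<subseteq> carrier G \<Longrightarrow> lprod G (y # ys) \<in> Units G \<Longrightarrow> y \<in> Units G"
  using unit_factor[of y "lprod G ys"] lprod_closed[of ys] by auto

lemma atom_assoc_elem:
  assumes "atom G x" "set xs \<subseteq> carrier G"
  shows "\<And>w. w \<in> Units G \<Longrightarrow> x = w \<otimes> lprod G xs \<Longrightarrow> \<exists>e\<in>set xs. \<exists>v\<in>Units G. x = e \<otimes> v"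
  using assms(2)
proof (induct xs)
  case Nil
  thus ?case using atomD[OF assms(1)] by simp
next
  case (Cons y ys)
  have yc: "y \<in> carrier G" and ysc: "set ys \<subseteq> carrier G" using Cons.prems by auto
  have wc: "w \<in> carrier G" using Cons.prems by auto
  have x1: "x = (w \<otimes> y) \<otimes> lprod G ys" using Cons.prems yc ysc wc by (simp add: m_assoc lprod_closed)
  have "w \<otimes> y \<in> Units G \<or> lprod G ys \<in> Units G"
    using assms(1) x1 yc wc ysc lprod_closed unfolding atom_def by blast
  thus ?case
  proof
    assume "w \<otimes> y \<in> Units G"
    from Cons.hyps[OF this x1 ysc] show ?case by auto
  next
    assume u: "lprod G ys \<in> Units G"
    have "x = y \<otimes> (w \<otimes> lprod G ys)" using x1 yc wc ysc lprod_closed by (simp add: m_ac)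
    moreover have "w \<otimes> lprod G ys \<in> Units G" using u Cons.prems by simp
    ultimately show ?case by auto
  qed
qed

lemma lengths_ge2:
  assumes k: "k \<in> lengths G z" "k \<ge> 2" and m: "m \<in> lengths G z"
  shows "m \<ge> 2"
proof (rule ccontr)
  assume "\<not> m \<ge> 2"
  hence m01: "m = 0 \<or> m = 1" by auto
  from m obtain xs u where xs: "length xs = m" "\<forall>x\<in>set xs. atom G x" "u \<in> Units G" "z = u \<otimes> lprod G xs"
    unfolding lengths_def by blast
  from k obtain ys u' where ys: "length ys = k" "\<forall>x\<in>set ys. atom G x" "u' \<in> Units G" "z = u' \<otimes> lprod G ys"
    unfolding lengths_def by blast
  obtain y1 r where yr: "ys = y1 # r" using ys(1) k(2) by (cases ys) auto
  obtain y2 ys' where "r = y2 # ys'" using ys(1) k(2) yr by (cases r) auto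
  hence yss: "ys = y1 # y2 # ys'" using yr by simp
  have ysc: "set ys \<subseteq> carrier G" using ys(2) by (auto simp: atom_def)
  have xsc: "set xs \<subseteq> carrier G" using xs(2) by (auto simp: atom_def)
  have y1c: "y1 \<in> carrier G" and y1n: "y1 \<notin> Units G" and y2n: "y2 \<notin> Units G"
    using ys(2) yss by (auto simp: atom_def)
  have u'c: "u' \<in> carrier G" using ys(3) by auto
  have uc: "u \<in> carrier G" using xs(3) by auto
  show False using m01
  proof
    assume "m = 0"
    hence "xs = []" using xs by simp
    hence "z \<in> Units G" using xs uc by simp
    hence "u' \<otimes> lprod G ys \<in> Units G" using ys by simp
    hence "lprod G ys \<in> Units G" using unit_factor2[of u' "lprod G ys"] u'c lprod_closed[OF ysc] by simp
    hence "y1 \<in> Units G" using lprod_Cons_unit[of y1 "y2 # ys'"] ysc yss by simp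
    thus False using y1n by simp
  next
    assume "m = 1"
    then obtain e where e: "xs = [e]" using xs(1) by (cases xs) auto
    have ea: "atom G e" using xs(2) e by auto
    hence ec: "e \<in> carrier G" by (simp add: atom_def)
    have ysc': "set (y2 # ys') \<subseteq> carrier G" using ysc yss by auto
    have "e = inv u \<otimes> z" using xs(4) e ec uc xs(3) by (simp add: m_assoc[symmetric] Units_l_inv)
    also have "\<dots> = (inv u \<otimes> u' \<otimes> y1) \<otimes> lprod G (y2 # ys')"
      using ys(4) yss ysc' uc u'c y1c xs(3) lprod_closed[OF ysc'] by (simp add: m_assoc)
    finally have ee: "e = (inv u \<otimes> u' \<otimes> y1) \<otimes> lprod G (y2 # ys')" .
    have c1: "inv u \<otimes> u' \<otimes> y1 \<in> carrier G" using uc u'c y1c xs(3) by simp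
    have "inv u \<otimes> u' \<otimes> y1 \<in> Units G \<or> lprod G (y2 # ys') \<in> Units G"
      using ea c1 lprod_closed[OF ysc'] unfolding atom_def by (metis ee)
    thus False
    proof
      assume "inv u \<otimes> u' \<otimes> y1 \<in> Units G"
      hence "y1 \<in> Units G" using unit_factor2[of "inv u \<otimes> u'" y1] uc u'c y1c xs(3) by simp
      thus False using y1n by simp
    next
      assume "lprod G (y2 # ys') \<in> Units G"
      hence "y2 \<in> Units G" using lprod_Cons_unit[of y2 ys'] ysc' by simp
      thus False using y2n by simp
    qed
  qed
qed

lemma lengths_upper:
  assumes a: "atom G a" and b: "atom G b" and c: "\<And>i. atom G (c i)"
    and ab: "a \<otimes> b = a [^] (3::nat)" and ac: "\<And>i::nat. a \<otimes> c i = a [^] (2*i+2::nat)"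
    and N: "even (N::nat)" and m: "2 \<le> m" "m \<le> N"
  shows "m \<in> lengths G (a [^] N)"
proof -
  have ac': "a \<in> carrier G" using a atomD by blast
  have bc: "b \<in> carrier G" using b atomD by blast
  have cc: "\<And>i. c i \<in> carrier G" using c atomD by blast
  show ?thesis
  proof (cases "even (N - m)")
    case True
    define i where "i = (N - m) div 2"
    have Ni: "N = m + 2*i" using True m unfolding i_def by simp
    define xs where "xs = replicate (m - 1) a @ [c i]"
    have s1: "set (replicate (m - 1) a) \<subseteq> carrier G" using ac' by auto
    have "lprod G xs = a [^] (m - 1) \<otimes> c i"
      unfolding xs_def using lprod_append[OF s1, of "[c i]"] lprod_replicate[OF ac'] cc by simp
    also have "\<dots> = a [^] (m - 2) \<otimes> (a \<otimes> c i)"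
    proof -
      have "a [^] (m - 1) = a [^] (m - 2) \<otimes> a" using m
        by (metis Suc_diff_Suc Suc_1 diff_Suc_1 less_le_trans lessI nat_pow_Suc)
      thus ?thesis using ac' cc by (simp add: m_assoc)
    qed
    also have "\<dots> = a [^] (m-2) \<otimes> a [^] (2*i+2)" by (simp only: ac)
    also have "\<dots> = a [^] (m - 2 + (2*i+2))" by (rule nat_pow_mult[OF ac'])
    also have "m - 2 + (2*i+2) = N" using Ni m by simp
    finally have eq: "a [^] N = \<one> \<otimes> lprod G xs" using ac' by simp
    have "length xs = m" using m by (simp add: xs_def)
    moreover have "\<forall>x\<in>set xs. atom G x" using a c by (auto simp: xs_def)
    ultimately show ?thesis unfolding lengths_def using eq by blast
  next
    case False
    hence m3: "m \<ge> 3" using N m by presburger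
    define i where "i = (N - m - 1) div 2"
    have Ni: "N = m + 2*i + 1" using False N m unfolding i_def by presburger
    define xs where "xs = replicate (m - 2) a @ [b, c i]"
    have s1: "set (replicate (m - 2) a) \<subseteq> carrier G" using ac' by auto
    have "lprod G xs = a [^] (m - 2) \<otimes> (b \<otimes> c i)"
      unfolding xs_def using lprod_append[OF s1, of "[b, c i]"] lprod_replicate[OF ac'] cc bc by simp
    also have "\<dots> = a [^] (m - 3) \<otimes> (a \<otimes> b) \<otimes> c i"
    proof -
      have "a [^] (m - 2) = a [^] (m - 3) \<otimes> a" using m3
        by (metis Suc_diff_Suc diff_Suc_eq_diff_pred numeral_3_eq_3 Suc_le_lessD nat_pow_Suc numeral_2_eq_2 diff_Suc_1)
      thus ?thesis using ac' cc bc by (simp add: m_assoc)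
    qed
    also have "\<dots> = a [^] (m - 3 + 3 - 1) \<otimes> (a \<otimes> c i)"
    proof -
      have "a [^] (m - 3) \<otimes> (a \<otimes> b) = a [^] (m - 3 + 3)" unfolding ab by (rule nat_pow_mult[OF ac'])
      also have "\<dots> = a [^] (m - 3 + 3 - 1) \<otimes> a" using m3
        by (metis add_diff_cancel_right' add_gr_0 nat_pow_Suc Suc_diff_1 zero_less_numeral)
      finally show ?thesis using ac' cc by (simp add: m_assoc)
    qed
    also have "\<dots> = a [^] (m - 3 + 3 - 1) \<otimes> a [^] (2*i+2)" by (simp only: ac)
    also have "\<dots> = a [^] (m - 3 + 3 - 1 + (2*i+2))" by (rule nat_pow_mult[OF ac'])
    also have "m - 3 + 3 - 1 + (2*i+2) = N" using Ni m3 by simp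
    finally have eq: "a [^] N = \<one> \<otimes> lprod G xs" using ac' by simp
    have "length xs = m" using m by (simp add: xs_def)
    moreover have "\<forall>x\<in>set xs. atom G x" using a b c by (auto simp: xs_def)
    ultimately show ?thesis unfolding lengths_def using eq by blast
  qed
qed

lemma union_lengths:
  assumes a: "atom G a" and b: "atom G b" and c: "\<And>i. atom G (c i)"
    and ab: "a \<otimes> b = a [^] (3::nat)" and ac: "\<And>i::nat. a \<otimes> c i = a [^] (2*i+2::nat)"
    and k: "k \<ge> 2"
  shows "union_of_sets_of_lengths G k = {n. n \<ge> 2}"
proof
  show "union_of_sets_of_lengths G k \<subseteq> {n. n \<ge> 2}"
    unfolding union_of_sets_of_lengths_def system_of_lengths_def
    using lengths_ge2 k by blast
  show "{n. n \<ge> 2} \<subseteq> union_of_sets_of_lengths G k"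
  proof
    fix n assume n: "n \<in> {n. n \<ge> (2::nat)}"
    define N where "N = 2 * (k + n)"
    have ac': "a \<in> carrier G" using a atomD by blast
    have "k \<in> lengths G (a [^] N)" "n \<in> lengths G (a [^] N)"
      using lengths_upper[OF a b c ab ac] k n by (auto simp: N_def)
    moreover have "lengths G (a [^] N) \<in> system_of_lengths G"
      unfolding system_of_lengths_def using ac' by blast
    ultimately show "n \<in> union_of_sets_of_lengths G k"
      unfolding union_of_sets_of_lengths_def by blast
  qed
qed

end

context comm_monoid begin
lemma no_assoc_pair:
  assumes uc: "unit_cancellative G" and a: "atom G a"
    and ac: "\<And>i::nat. a \<otimes> c i = a [^] (2*i+2::nat)"
    and cc: "\<And>i. c i \<in> carrier G"
    and ij: "i < j" and e: "e \<in> carrier G" and v: "v \<in> Units G" and v': "v' \<in> Units G"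
    and ci: "c i = e \<otimes> v" and cj: "c j = e \<otimes> v'"
  shows False
proof -
  have ac': "a \<in> carrier G" and an: "a \<notin> Units G" using a by (auto simp: atom_def)
  have vc: "v \<in> carrier G" "v' \<in> carrier G" "inv v \<in> carrier G" using v v' by auto
  define w where "w = inv v \<otimes> v'"
  have wU: "w \<in> Units G" using v v' by (simp add: w_def)
  hence wc: "w \<in> carrier G" "inv w \<in> carrier G" by auto
  have "c i \<otimes> w = e \<otimes> ((v \<otimes> inv v) \<otimes> v')" using ci e vc by (simp add: w_def m_assoc)
  also have "\<dots> = e \<otimes> v'" using v vc by simp
  finally have "c j = c i \<otimes> w" using cj by simp
  define X where "X = a [^] (2*i+2::nat)"
  define P where "P = a [^] (2*(j-i)::nat)"
  have Xc: "X \<in> carrier G" and Pc: "P \<in> carrier G" using ac' by (auto simp: X_def P_def)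
  have "X \<otimes> P = a [^] (2*i+2 + 2*(j-i))" unfolding X_def P_def by (rule nat_pow_mult[OF ac'])
  also have "2*i+2 + 2*(j-i) = 2*j+2" using ij by simp
  finally have "a [^] (2*j+2::nat) = X \<otimes> P" by simp
  moreover have "a [^] (2*j+2::nat) = X \<otimes> w"
  proof -
    have "a [^] (2*j+2::nat) = a \<otimes> c j" using ac by simp
    also have "\<dots> = (a \<otimes> c i) \<otimes> w" using \<open>c j = c i \<otimes> w\<close> ac' cc wc by (simp add: m_assoc)
    finally show ?thesis using ac X_def by simp
  qed
  ultimately have "X \<otimes> P = X \<otimes> w" by simp
  hence "X \<otimes> (P \<otimes> inv w) = X \<otimes> (w \<otimes> inv w)" using Xc Pc wc by (simp add: m_assoc[symmetric])
  hence "X \<otimes> (P \<otimes> inv w) = X" using Xc wU by simp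
  hence "P \<otimes> inv w \<in> Units G" using uc Xc Pc wc unfolding unit_cancellative_def by blast
  hence PU: "P \<in> Units G" using unit_factor[of P "inv w"] Pc wc by simp
  have "P = a \<otimes> a [^] (2*(j-i) - 1)" unfolding P_def using ij ac'
    by (metis Suc_diff_1 nat_pow_Suc2 nat_0_less_mult_iff zero_less_diff zero_less_numeral)
  hence "a \<in> Units G" using PU unit_factor[of a "a [^] (2*(j-i) - 1)"] ac' by simp
  thus False using an by simp
qed

end

context comm_monoid begin
lemma not_lfg:
  assumes uc: "unit_cancellative G" and a: "atom G a"
    and c: "\<And>i::nat. atom G (c i)"
    and ac: "\<And>i::nat. a \<otimes> c i = a [^] (2*i+2::nat)"
  shows "\<not> locally_finitely_generated G"
proof
  assume lfg: "locally_finitely_generated G"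
  have ac': "a \<in> carrier G" using a by (simp add: atom_def)
  have cc: "\<And>i. c i \<in> carrier G" using c by (simp add: atom_def)
  have "\<exists>E. finite E \<and> E \<subseteq> divisors_of_powers G a \<and>
      (\<forall>b\<in>divisors_of_powers G a. \<exists>u\<in>Units G. \<exists>xs. set xs \<subseteq> E \<and> b = u \<otimes> lprod G xs)"
    using lfg ac' unfolding locally_finitely_generated_def by (rule bspec)
  then obtain E where E: "finite E" "E \<subseteq> divisors_of_powers G a"
    and rep: "\<forall>b\<in>divisors_of_powers G a. \<exists>u\<in>Units G. \<exists>xs. set xs \<subseteq> E \<and> b = u \<otimes> lprod G xs"
    by (elim exE conjE)
  have Ec: "E \<subseteq> carrier G" using E(2) unfolding divisors_of_powers_def by auto
  have ex: "\<exists>e. e \<in> E \<and> (\<exists>v\<in>Units G. c i = e \<otimes> v)" for i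
  proof -
    have "a [^] (2*i+2::nat) = c i \<otimes> a" using ac[of i] cc ac' by (simp add: m_comm)
    hence "c i divides a [^] (2*i+2::nat)" by (rule dividesI[OF ac'])
    hence "c i \<in> divisors_of_powers G a" using cc unfolding divisors_of_powers_def by (intro CollectI conjI exI)
    hence "\<exists>u\<in>Units G. \<exists>xs. set xs \<subseteq> E \<and> c i = u \<otimes> lprod G xs" using rep by (rule bspec[rotated])
    then obtain u xs where u: "u \<in> Units G" and xs: "set xs \<subseteq> E" "c i = u \<otimes> lprod G xs"
      by (elim bexE exE conjE)
    have xsc: "set xs \<subseteq> carrier G" using xs(1) Ec by (rule subset_trans)
    from atom_assoc_elem[OF c[of i] xsc u xs(2)] obtain e v where "e \<in> set xs" "v \<in> Units G" "c i = e \<otimes> v"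
      by (elim bexE)
    thus ?thesis using xs(1) by auto
  qed
  define f where "f i = (SOME e. e \<in> E \<and> (\<exists>v\<in>Units G. c i = e \<otimes> v))" for i
  have f: "f i \<in> E \<and> (\<exists>v\<in>Units G. c i = f i \<otimes> v)" for i
    unfolding f_def by (rule someI_ex[OF ex])
  have "f ` UNIV \<subseteq> E" using f by blast
  hence "finite (f ` UNIV)" using E(1) finite_subset by blast
  hence "\<not> inj f" using finite_imageD[of f UNIV] infinite_UNIV_nat by blast
  then obtain i j where ij: "i \<noteq> j" "f i = f j" unfolding inj_def by blast
  obtain v where v: "v \<in> Units G" "c i = f i \<otimes> v" using f by blast
  obtain v' where v': "v' \<in> Units G" "c j = f j \<otimes> v'" using f by blast
  have fc: "f i \<in> carrier G" using f Ec by blast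
  show False
  proof (cases "i < j")
    case True
    show False by (rule no_assoc_pair[OF uc a ac cc True fc v(1) v'(1) v(2)]) (use v' ij in simp)
  next
    case False
    hence "j < i" using ij by simp
    show False by (rule no_assoc_pair[OF uc a ac cc \<open>j < i\<close> fc v'(1) v(1)]) (use v' v ij in simp_all)
  qed
qed

end

lemma not_transfer:
  fixes H :: "('a, 'c) monoid_scheme" and B :: "('b, 'd) monoid_scheme"
  assumes H: "comm_monoid H" and a: "atom H a" and b: "atom H b"
    and ab: "a \<otimes>\<^bsub>H\<^esub> b = a [^]\<^bsub>H\<^esub> (3::nat)"
    and B: "comm_monoid_cancel B" and th: "transfer_hom H B \<theta>"
  shows False
proof -
  interpret H: comm_monoid H by fact
  interpret B: comm_monoid_cancel B by fact
  have ac: "a \<in> carrier H" and an: "a \<notin> Units H" using a by (auto simp: atom_def)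
  have bc: "b \<in> carrier H" using b by (simp add: atom_def)
  have hom: "\<And>x. x \<in> carrier H \<Longrightarrow> \<theta> x \<in> carrier B"
    "\<And>x y. x \<in> carrier H \<Longrightarrow> y \<in> carrier H \<Longrightarrow> \<theta> (x \<otimes>\<^bsub>H\<^esub> y) = \<theta> x \<otimes>\<^bsub>B\<^esub> \<theta> y"
    using th unfolding transfer_hom_def monoid_hom_def by auto
  have U: "{h \<in> carrier H. \<theta> h \<in> Units B} = Units H" using th unfolding transfer_hom_def by blast
  have a3: "a [^]\<^bsub>H\<^esub> (3::nat) = a \<otimes>\<^bsub>H\<^esub> (a \<otimes>\<^bsub>H\<^esub> a)"
    using ac by (simp add: numeral_3_eq_3 H.m_assoc)
  have "\<theta> a \<otimes>\<^bsub>B\<^esub> \<theta> b = \<theta> a \<otimes>\<^bsub>B\<^esub> (\<theta> a \<otimes>\<^bsub>B\<^esub> \<theta> a)"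
    using ab a3 hom ac bc by (metis H.m_closed)
  hence tb: "\<theta> b = \<theta> a \<otimes>\<^bsub>B\<^esub> \<theta> a" using hom ac bc by (simp add: B.l_cancel)
  obtain v w where vw: "v \<in> carrier H" "w \<in> carrier H" "b = v \<otimes>\<^bsub>H\<^esub> w"
    and ev: "\<exists>e\<in>Units B. \<theta> v = \<theta> a \<otimes>\<^bsub>B\<^esub> e" and ew: "\<exists>e\<in>Units B. \<theta> w = \<theta> a \<otimes>\<^bsub>B\<^esub> e"
    using th tb hom(1)[OF ac] bc unfolding transfer_hom_def by blast
  have "v \<in> Units H \<or> w \<in> Units H" using b vw unfolding atom_def by blast
  hence "\<exists>e\<in>Units B. \<theta> a \<otimes>\<^bsub>B\<^esub> e \<in> Units B"
  proof
    assume "v \<in> Units H" hence "\<theta> v \<in> Units B" using U by blast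
    thus ?thesis using ev by auto
  next
    assume "w \<in> Units H" hence "\<theta> w \<in> Units B" using U by blast
    thus ?thesis using ew by auto
  qed
  then obtain e where "e \<in> Units B" "\<theta> a \<otimes>\<^bsub>B\<^esub> e \<in> Units B" by blast
  hence "\<theta> a \<in> Units B" using B.unit_factor hom(1)[OF ac] by blast
  hence "a \<in> Units H" using U ac by blast
  thus False using an by simp
qed


theorem lemma5p3:
  fixes R :: "('a, 'r) ring_scheme" and X1 X2 :: 'a
  assumes "domain R"
    and "BF_monoid (ideal_monoid R)"
    and "X1 \<in> carrier R - {\<zero>\<^bsub>R\<^esub>}" and "X2 \<in> carrier R - {\<zero>\<^bsub>R\<^esub>}" and "X1 \<noteq> X2"
    and "atom (ideal_monoid R) (ideal_a1 R X1 X2)"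
    and "atom (ideal_monoid R) (ideal_b2 R X1 X2)"
    and "\<forall>i::nat. atom (ideal_monoid R) (ideal_c R i X1 X2)"
  shows "\<not> transfer_Krull (ideal_monoid R) TYPE(('b, 'd) monoid_scheme)
    \<and> \<not> locally_finitely_generated (ideal_monoid R)
    \<and> (\<forall>k::nat. k \<ge> 2 \<longrightarrow> union_of_sets_of_lengths (ideal_monoid R) k = {n. n \<ge> 2})"
proof -
  interpret domain R by fact
  have X1: "X1 \<in> carrier R" and X2: "X2 \<in> carrier R" using assms(3,4) by auto
  have H: "comm_monoid (ideal_monoid R)" and uc: "unit_cancellative (ideal_monoid R)"
    using assms(2) unfolding BF_monoid_def by auto
  have a: "atom (ideal_monoid R) (ideal_a1 R X1 X2)" by fact
  have b: "atom (ideal_monoid R) (ideal_b2 R X1 X2)" by fact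
  have c: "\<And>i. atom (ideal_monoid R) (ideal_c R i X1 X2)" using assms(8) by blast
  have ab: "ideal_a1 R X1 X2 \<otimes>\<^bsub>ideal_monoid R\<^esub> ideal_b2 R X1 X2 = ideal_a1 R X1 X2 [^]\<^bsub>ideal_monoid R\<^esub> (3::nat)"
    by (rule a1_b2[OF X1 X2])
  have ac: "\<And>i::nat. ideal_a1 R X1 X2 \<otimes>\<^bsub>ideal_monoid R\<^esub> ideal_c R i X1 X2 = ideal_a1 R X1 X2 [^]\<^bsub>ideal_monoid R\<^esub> (2*i+2::nat)"
    by (rule a1_c[OF X1 X2])
  have p1: "\<not> transfer_Krull (ideal_monoid R) TYPE(('b, 'd) monoid_scheme)"
  proof
    assume "transfer_Krull (ideal_monoid R) TYPE(('b, 'd) monoid_scheme)"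
    then obtain B :: "('b, 'd) monoid_scheme" and \<theta> where "Krull_monoid B" "transfer_hom (ideal_monoid R) B \<theta>"
      unfolding transfer_Krull_def by blast
    moreover hence "comm_monoid_cancel B" unfolding Krull_monoid_def by blast
    ultimately show False using not_transfer[OF H a b ab] by blast
  qed
  have p2: "\<not> locally_finitely_generated (ideal_monoid R)"
    by (rule comm_monoid.not_lfg[OF H uc a c ac])
  have p3: "\<forall>k::nat. k \<ge> 2 \<longrightarrow> union_of_sets_of_lengths (ideal_monoid R) k = {n. n \<ge> 2}"
    using comm_monoid.union_lengths[OF H a b c ab ac] by blast
  show ?thesis using p1 p2 p3 by blast
qed

end
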